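(* Let $(\mathbf{P},d_{\mathbf{P}})$ be a finite metric poset. For all $\mathbf{P}$-modules $M,N$, \[ d^{\mathrm{Int}\overline{\mathbf{P}}}_{\mathrm{GT}}\bigl(K(M),K(N)\bigr)\ \le\ d^{\mathbf{P}}_{\mathrm{GT}}(M,N). \]
   Context: Fix a field $k$; $\mathrm{vect}$ is the category of finite-dimensional $k$-vector spaces. Finite posets are categories with a unique morphism $x\to y$ iff $x\le y$; for a finite poset $\mathbf{S}$, an $\mathbf{S}$-module is a functor $\mathbf{S}\to\mathrm{vect}$; $g^*$ is precomposition with a monotone map $g$. $\overline{\mathbf{P}}=\mathbf{P}\sqcup\{\top\}$ with $x<\top$ for all $x\in\mathbf{P}$; its extended metric $d_{\overline{\mathbf{P}}}$ extends $d_{\mathbf{P}}$ by $d(x,\top)=d(\top,x)=\infty$ ($x\neq\top$), $d(\top,\top)=0$. For a finite poset $\mathbf{S}$ with (extended) metric, $\mathrm{Int}\,\mathbf{S}=\{(x,y)\in\mathbf{S}\times\mathbf{S}\mid x\le y\}$ with the product order and metric $d_{\mathrm{Int}\mathbf{S}}((x_1,y_1),(x_2,y_2))=\max\{d_{\mathbf{S}}(x_1,x_2),d_{\mathbf{S}}(y_1,y_2)\}$. For $M\in\mathrm{vect}^{\mathbf{P}}$, $\overline{M}$ extends $M$ to $\overline{\mathbf{P}}$ by $\overline{M}(\top)=0$, and $K(M)\in\mathrm{vect}^{\mathrm{Int}\overline{\mathbf{P}}}$ is given by $K(M)((x,y))=\ker\overline{M}(x\le y)$ with structure map for $(x_1,y_1)\le(x_2,y_2)$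 the restriction of $\overline{M}(x_1\le x_2)$. For a finite poset $\mathbf{S}$ with (possibly extended) metric $d_{\mathbf{S}}$ and $\mathbf{S}$-modules $A,B$: a Galois insertion $f:\mathbf{Q}\rightleftarrows\mathbf{S}:g$ is a pair of monotone maps with $f(u)\le x\iff u\le g(x)$ and $f\circ g=\mathrm{id}_{\mathbf{S}}$; a Galois coupling of $(A,B)$ is $(\mathbf{Q},f\dashv g,h\dashv i,\Gamma)$ with $\mathbf{Q}$ a finite poset, $f:\mathbf{Q}\rightleftarrows\mathbf{S}:g$ and $h:\mathbf{Q}\rightleftarrows\mathbf{S}:i$ Galois insertions, $\Gamma\in\mathrm{vect}^{\mathbf{Q}}$ with $g^*\Gamma\cong A$, $i^*\Gamma\cong B$; its cost is $\sup_{q\in\mathbf{Q}}d_{\mathbf{S}}(f(q),h(q))$; $d^{\mathbf{S}}_{\mathrm{GT}}(A,B)$ is the infimum of costs of couplings ($\infty$ if none). *)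

theory Defs
  imports Complex_Main "HOL-Library.Function_Algebras" "HOL-Library.Extended_Nonnegative_Real"
begin

text \<open>All vector spaces are realised as subspaces of the ambient k-vector space
  of functions nat => k.  Every finite-dimensional k-vector space is isomorphic
  to such a subspace, so modules over a poset (functors into vect) are, up to
  isomorphism, exactly the data below.\<close>

type_synonym 'k vec = "nat \<Rightarrow> 'k"

definition vscale :: "'k::field \<Rightarrow> 'k vec \<Rightarrow> 'k vec" where
  "vscale c v = (\<lambda>n. c * v n)"

definition is_subspace :: "('k::field) vec set \<Rightarrow> bool" where
  "is_subspace V \<longleftrightarrow> 0 \<in> V \<and> (\<forall>u\<in>V. \<forall>v\<in>V. u + v \<in> V) \<and> (\<forall>c. \<forall>v\<in>V. vscale c v \<in> V)"

definition fin_dim :: "('k::field) vec set \<Rightarrow> bool" where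
  "fin_dim V \<longleftrightarrow> (\<exists>B. finite B \<and> B \<subseteq> V \<and> V \<subseteq> module.span vscale B)"

definition is_linear_on :: "('k::field) vec set \<Rightarrow> 'k vec set \<Rightarrow> ('k vec \<Rightarrow> 'k vec) \<Rightarrow> bool" where
  "is_linear_on V W \<phi> \<longleftrightarrow> (\<forall>v\<in>V. \<phi> v \<in> W) \<and> (\<forall>u\<in>V. \<forall>v\<in>V. \<phi> (u + v) = \<phi> u + \<phi> v)
     \<and> (\<forall>c. \<forall>v\<in>V. \<phi> (vscale c v) = vscale c (\<phi> v))"

definition is_poset :: "'a set \<Rightarrow> ('a \<Rightarrow> 'a \<Rightarrow> bool) \<Rightarrow> bool" where
  "is_poset X le \<longleftrightarrow> (\<forall>x\<in>X. le x x) \<and> (\<forall>x\<in>X. \<forall>y\<in>X. le x y \<and> le y x \<longrightarrow> x = y)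
     \<and> (\<forall>x\<in>X. \<forall>y\<in>X. \<forall>z\<in>X. le x y \<and> le y z \<longrightarrow> le x z)"

definition is_monotone :: "'a set \<Rightarrow> ('a \<Rightarrow> 'a \<Rightarrow> bool) \<Rightarrow> 'b set \<Rightarrow> ('b \<Rightarrow> 'b \<Rightarrow> bool) \<Rightarrow> ('a \<Rightarrow> 'b) \<Rightarrow> bool" where
  "is_monotone X leX Y leY f \<longleftrightarrow> (\<forall>x\<in>X. f x \<in> Y) \<and> (\<forall>x\<in>X. \<forall>y\<in>X. leX x y \<longrightarrow> leY (f x) (f y))"

definition galois_insertion ::
  "'q set \<Rightarrow> ('q \<Rightarrow> 'q \<Rightarrow> bool) \<Rightarrow> 's set \<Rightarrow> ('s \<Rightarrow> 's \<Rightarrow> bool) \<Rightarrow> ('q \<Rightarrow> 's) \<Rightarrow> ('s \<Rightarrow> 'q) \<Rightarrow> bool" where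
  "galois_insertion Q leQ S leS f g \<longleftrightarrow>
     is_monotone Q leQ S leS f \<and> is_monotone S leS Q leQ g
     \<and> (\<forall>u\<in>Q. \<forall>x\<in>S. leS (f u) x \<longleftrightarrow> leQ u (g x))
     \<and> (\<forall>x\<in>S. f (g x) = x)"

definition is_module :: "'a set \<Rightarrow> ('a \<Rightarrow> 'a \<Rightarrow> bool) \<Rightarrow> ('a \<Rightarrow> ('k::field) vec set)
    \<Rightarrow> ('a \<Rightarrow> 'a \<Rightarrow> 'k vec \<Rightarrow> 'k vec) \<Rightarrow> bool" where
  "is_module S le V F \<longleftrightarrow>
     (\<forall>x\<in>S. is_subspace (V x) \<and> fin_dim (V x))
     \<and> (\<forall>x\<in>S. \<forall>y\<in>S. le x y \<longrightarrow> is_linear_on (V x) (V y) (F x y))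
     \<and> (\<forall>x\<in>S. \<forall>v\<in>V x. F x x v = v)
     \<and> (\<forall>x\<in>S. \<forall>y\<in>S. \<forall>z\<in>S. le x y \<and> le y z \<longrightarrow> (\<forall>v\<in>V x. F y z (F x y v) = F x z v))"

definition module_iso :: "'a set \<Rightarrow> ('a \<Rightarrow> 'a \<Rightarrow> bool)
    \<Rightarrow> ('a \<Rightarrow> ('k::field) vec set) \<Rightarrow> ('a \<Rightarrow> 'a \<Rightarrow> 'k vec \<Rightarrow> 'k vec)
    \<Rightarrow> ('a \<Rightarrow> 'k vec set) \<Rightarrow> ('a \<Rightarrow> 'a \<Rightarrow> 'k vec \<Rightarrow> 'k vec) \<Rightarrow> bool" where
  "module_iso S le VA FA VB FB \<longleftrightarrow>
     (\<exists>\<phi>. (\<forall>x\<in>S. is_linear_on (VA x) (VB x) (\<phi> x) \<and> bij_betw (\<phi> x) (VA x) (VB x))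
        \<and> (\<forall>x\<in>S. \<forall>y\<in>S. le x y \<longrightarrow> (\<forall>v\<in>VA x. \<phi> y (FA x y v) = FB x y (\<phi> x v))))"

text \<open>Couplings use posets Q carried by finite subsets of nat (every finite poset
  is isomorphic to one of these).  The pullback g^* Gamma has spaces VG (g x) and maps
  FG (g x) (g y).\<close>
definition is_coupling :: "'b set \<Rightarrow> ('b \<Rightarrow> 'b \<Rightarrow> bool)
    \<Rightarrow> ('b \<Rightarrow> ('k::field) vec set) \<Rightarrow> ('b \<Rightarrow> 'b \<Rightarrow> 'k vec \<Rightarrow> 'k vec)
    \<Rightarrow> ('b \<Rightarrow> 'k vec set) \<Rightarrow> ('b \<Rightarrow> 'b \<Rightarrow> 'k vec \<Rightarrow> 'k vec)
    \<Rightarrow> nat set \<Rightarrow> (nat \<Rightarrow> nat \<Rightarrow> bool) \<Rightarrow> (nat \<Rightarrow> 'b) \<Rightarrow> ('b \<Rightarrow> nat) \<Rightarrow> (nat \<Rightarrow> 'b) \<Rightarrow> ('b \<Rightarrow> nat)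
    \<Rightarrow> (nat \<Rightarrow> 'k vec set) \<Rightarrow> (nat \<Rightarrow> nat \<Rightarrow> 'k vec \<Rightarrow> 'k vec) \<Rightarrow> bool" where
  "is_coupling S le VA FA VB FB Q leQ f g h i VG FG \<longleftrightarrow>
     finite Q \<and> is_poset Q leQ
     \<and> galois_insertion Q leQ S le f g \<and> galois_insertion Q leQ S le h i
     \<and> is_module Q leQ VG FG
     \<and> module_iso S le (\<lambda>x. VG (g x)) (\<lambda>x y. FG (g x) (g y)) VA FA
     \<and> module_iso S le (\<lambda>x. VG (i x)) (\<lambda>x y. FG (i x) (i y)) VB FB"

text \<open>d_GT: infimum of costs sup_q d (f q) (h q); Inf of the empty set is infinity.\<close>
definition d_GT :: "'b set \<Rightarrow> ('b \<Rightarrow> 'b \<Rightarrow> bool) \<Rightarrow> ('b \<Rightarrow> 'b \<Rightarrow> ennreal)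
    \<Rightarrow> ('b \<Rightarrow> ('k::field) vec set) \<Rightarrow> ('b \<Rightarrow> 'b \<Rightarrow> 'k vec \<Rightarrow> 'k vec)
    \<Rightarrow> ('b \<Rightarrow> 'k vec set) \<Rightarrow> ('b \<Rightarrow> 'b \<Rightarrow> 'k vec \<Rightarrow> 'k vec) \<Rightarrow> ennreal" where
  "d_GT S le d VA FA VB FB =
     Inf {(SUP q\<in>Q. d (f q) (h q)) | Q leQ f g h i VG FG.
            is_coupling S le VA FA VB FB Q leQ f g h i VG FG}"

definition is_metric :: "'a set \<Rightarrow> ('a \<Rightarrow> 'a \<Rightarrow> real) \<Rightarrow> bool" where
  "is_metric X d \<longleftrightarrow> (\<forall>x\<in>X. \<forall>y\<in>X. 0 \<le> d x y \<and> (d x y = 0 \<longleftrightarrow> x = y) \<and> d x y = d y x)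
     \<and> (\<forall>x\<in>X. \<forall>y\<in>X. \<forall>z\<in>X. d x z \<le> d x y + d y z)"

text \<open>P-bar = P with a new top element, represented as None.\<close>
definition Pbar :: "'a set \<Rightarrow> 'a option set" where
  "Pbar P = Some ` P \<union> {None}"

fun le_bar :: "('a \<Rightarrow> 'a \<Rightarrow> bool) \<Rightarrow> 'a option \<Rightarrow> 'a option \<Rightarrow> bool" where
  "le_bar le (Some x) (Some y) = le x y"
| "le_bar le _ None = True"
| "le_bar le None (Some y) = False"

fun d_bar :: "('a \<Rightarrow> 'a \<Rightarrow> real) \<Rightarrow> 'a option \<Rightarrow> 'a option \<Rightarrow> ennreal" where
  "d_bar d (Some x) (Some y) = ennreal (d x y)"
| "d_bar d None None = 0"
| "d_bar d _ _ = \<infinity>"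

definition Int_carrier :: "'a set \<Rightarrow> ('a \<Rightarrow> 'a \<Rightarrow> bool) \<Rightarrow> ('a \<times> 'a) set" where
  "Int_carrier S le = {(x, y). x \<in> S \<and> y \<in> S \<and> le x y}"

definition Int_le :: "('a \<Rightarrow> 'a \<Rightarrow> bool) \<Rightarrow> 'a \<times> 'a \<Rightarrow> 'a \<times> 'a \<Rightarrow> bool" where
  "Int_le le p q \<longleftrightarrow> le (fst p) (fst q) \<and> le (snd p) (snd q)"

definition Int_dist :: "('a \<Rightarrow> 'a \<Rightarrow> ennreal) \<Rightarrow> 'a \<times> 'a \<Rightarrow> 'a \<times> 'a \<Rightarrow> ennreal" where
  "Int_dist d p q = max (d (fst p) (fst q)) (d (snd p) (snd q))"

fun V_bar :: "('a \<Rightarrow> ('k::field) vec set) \<Rightarrow> 'a option \<Rightarrow> 'k vec set" where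
  "V_bar V (Some x) = V x"
| "V_bar V None = {0}"

fun F_bar :: "('a \<Rightarrow> 'a \<Rightarrow> ('k::field) vec \<Rightarrow> 'k vec) \<Rightarrow> 'a option \<Rightarrow> 'a option \<Rightarrow> 'k vec \<Rightarrow> 'k vec" where
  "F_bar F (Some x) (Some y) = F x y"
| "F_bar F _ _ = (\<lambda>v. 0)"

definition K_V :: "('a \<Rightarrow> ('k::field) vec set) \<Rightarrow> ('a \<Rightarrow> 'a \<Rightarrow> 'k vec \<Rightarrow> 'k vec)
    \<Rightarrow> 'a option \<times> 'a option \<Rightarrow> 'k vec set" where
  "K_V V F p = {v \<in> V_bar V (fst p). F_bar F (fst p) (snd p) v = 0}"

definition K_F :: "('a \<Rightarrow> 'a \<Rightarrow> ('k::field) vec \<Rightarrow> 'k vec)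
    \<Rightarrow> 'a option \<times> 'a option \<Rightarrow> 'a option \<times> 'a option \<Rightarrow> 'k vec \<Rightarrow> 'k vec" where
  "K_F F p q = F_bar F (fst p) (fst q)"

end

theory Submission
  imports Defs "HOL-Library.Countable"
begin

lemma vs_vscale: "vector_space (vscale :: 'k::field \<Rightarrow> 'k vec \<Rightarrow> 'k vec)"
  by unfold_locales (auto simp: vscale_def fun_eq_iff algebra_simps)

lemma fin_dim_sub:
  fixes W V :: "('k::field) vec set"
  assumes "is_subspace W" "W \<subseteq> V" "fin_dim V"
  shows "fin_dim W"
proof -
  interpret vector_space "vscale :: 'k \<Rightarrow> 'k vec \<Rightarrow> 'k vec" by (rule vs_vscale)
  obtain B where B: "finite B" "B \<subseteq> V" "V \<subseteq> span B" using assms(3) fin_dim_def by blast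
  obtain C where C: "C \<subseteq> W" "independent C" "W \<subseteq> span C" by (meson basis_exists)
  have "finite C" using independent_span_bound[OF B(1) C(2)] C(1) assms(2) B(3) by blast
  then show ?thesis unfolding fin_dim_def using C by blast
qed

lemma fin_dim_zero: "fin_dim {0::('k::field) vec}"
  unfolding fin_dim_def
proof (intro exI[of _ "{}"] conjI)
  interpret vector_space "vscale :: 'k \<Rightarrow> 'k vec \<Rightarrow> 'k vec" by (rule vs_vscale)
  show "{0::'k vec} \<subseteq> span {}" by simp
qed auto

lemma lin0: "is_linear_on V W \<phi> \<Longrightarrow> 0 \<in> V \<Longrightarrow> \<phi> 0 = 0"
  unfolding is_linear_on_def by (metis add.right_neutral add_left_imp_eq)

lemma subspace_zero: "is_subspace {0::('k::field) vec}"
  by (auto simp: is_subspace_def vscale_def fun_eq_iff)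

lemma Pbar_iff: "x \<in> Pbar S \<longleftrightarrow> x = None \<or> (\<exists>a\<in>S. x = Some a)"
  by (auto simp: Pbar_def)

lemma Pbar_cases: "x \<in> Pbar S \<Longrightarrow> (x = None \<Longrightarrow> R) \<Longrightarrow> (\<And>a. a \<in> S \<Longrightarrow> x = Some a \<Longrightarrow> R) \<Longrightarrow> R"
  by (auto simp: Pbar_def)

lemma module_bar:
  assumes "is_module S le V F"
  shows "is_module (Pbar S) (le_bar le) (V_bar V) (F_bar F)"
proof -
  note A = assms[unfolded is_module_def]
  have 1: "is_subspace (V_bar V x) \<and> fin_dim (V_bar V x)" if "x \<in> Pbar S" for x
    using that by (elim Pbar_cases) (use A subspace_zero fin_dim_zero in auto)
  have 2: "is_linear_on (V_bar V x) (V_bar V y) (F_bar F x y)"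
    if "x \<in> Pbar S" "y \<in> Pbar S" "le_bar le x y" for x y
    using that by (elim Pbar_cases) (use A in \<open>auto simp: is_linear_on_def vscale_def\<close>)
  have 3: "F_bar F x x v = v" if "x \<in> Pbar S" "v \<in> V_bar V x" for x v
    using that by (elim Pbar_cases) (use A in auto)
  have 4: "F_bar F y z (F_bar F x y v) = F_bar F x z v"
    if "x \<in> Pbar S" "y \<in> Pbar S" "z \<in> Pbar S" "le_bar le x y \<and> le_bar le y z" "v \<in> V_bar V x" for x y z v
    using that by (elim Pbar_cases) (use A in auto)
  show ?thesis unfolding is_module_def using 1 2 3 4 by blast
qed

lemma poset_bar:
  assumes "is_poset Q leQ" shows "is_poset (Pbar Q) (le_bar leQ)"
proof -
  have R: "\<forall>x\<in>Q. leQ x x" and AS: "\<forall>x\<in>Q. \<forall>y\<in>Q. leQ x y \<and> leQ y x \<longrightarrow> x = y"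
    and T: "\<forall>x\<in>Q. \<forall>y\<in>Q. \<forall>z\<in>Q. leQ x y \<and> leQ y z \<longrightarrow> leQ x z"
    using assms unfolding is_poset_def by blast+
  have 1: "le_bar leQ x x" if "x \<in> Pbar Q" for x
    using that by (elim Pbar_cases) (use R in simp_all)
  have 2: "x = y" if "x \<in> Pbar Q" "y \<in> Pbar Q" "le_bar leQ x y" "le_bar leQ y x" for x y
    using that by (elim Pbar_cases) (use AS in simp_all)
  have 3: "le_bar leQ x z" if "x \<in> Pbar Q" "y \<in> Pbar Q" "z \<in> Pbar Q" "le_bar leQ x y" "le_bar leQ y z" for x y z
    using that apply (elim Pbar_cases) apply simp_all using T by blast
  show ?thesis unfolding is_poset_def using 1 2 3 by blast
qed

lemma poset_Int:
  assumes "is_poset T leT" shows "is_poset (Int_carrier T leT) (Int_le leT)"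
proof -
  have R: "\<forall>x\<in>T. leT x x" and AS: "\<forall>x\<in>T. \<forall>y\<in>T. leT x y \<and> leT y x \<longrightarrow> x = y"
    and TR: "\<forall>x\<in>T. \<forall>y\<in>T. \<forall>z\<in>T. leT x y \<and> leT y z \<longrightarrow> leT x z"
    using assms unfolding is_poset_def by blast+
  have 1: "Int_le leT p p" if "p \<in> Int_carrier T leT" for p
    using that R by (auto simp: Int_le_def Int_carrier_def)
  have 2: "p = q" if "p \<in> Int_carrier T leT" "q \<in> Int_carrier T leT" "Int_le leT p q" "Int_le leT q p" for p q
  proof -
    have "fst p = fst q" "snd p = snd q" using that AS by (auto simp: Int_le_def Int_carrier_def)
    then show ?thesis by (simp add: prod_eq_iff)
  qed
  have 3: "Int_le leT p r" if "p \<in> Int_carrier T leT" "q \<in> Int_carrier T leT" "r \<in> Int_carrier T leT"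
     "Int_le leT p q" "Int_le leT q r" for p q r
  proof -
    have "fst p \<in> T" "snd p \<in> T" "fst q \<in> T" "snd q \<in> T" "fst r \<in> T" "snd r \<in> T"
      using that(1-3) by (auto simp: Int_carrier_def)
    moreover have "leT (fst p) (fst q)" "leT (snd p) (snd q)" "leT (fst q) (fst r)" "leT (snd q) (snd r)"
      using that(4,5) by (auto simp: Int_le_def)
    ultimately show ?thesis unfolding Int_le_def using TR by blast
  qed
  show ?thesis unfolding is_poset_def using 1 2 3 by blast
qed

lemma gi_bar:
  assumes "galois_insertion Q leQ S le f g"
  shows "galois_insertion (Pbar Q) (le_bar leQ) (Pbar S) (le_bar le) (map_option f) (map_option g)"
proof -
  note A = assms[unfolded galois_insertion_def is_monotone_def]
  show ?thesis unfolding galois_insertion_def is_monotone_def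
  proof (intro conjI ballI impI)
    fix x assume "x \<in> Pbar Q" then show "map_option f x \<in> Pbar S"
      by (elim Pbar_cases) (use A in \<open>auto simp: Pbar_def\<close>)
  next
    fix x y assume "x \<in> Pbar Q" "y \<in> Pbar Q" "le_bar leQ x y" then show "le_bar le (map_option f x) (map_option f y)"
      by (elim Pbar_cases) (use A in auto)
  next
    fix x assume "x \<in> Pbar S" then show "map_option g x \<in> Pbar Q"
      by (elim Pbar_cases) (use A in \<open>auto simp: Pbar_def\<close>)
  next
    fix x y assume "x \<in> Pbar S" "y \<in> Pbar S" "le_bar le x y" then show "le_bar leQ (map_option g x) (map_option g y)"
      by (elim Pbar_cases) (use A in auto)
  next
    fix u x assume "u \<in> Pbar Q" "x \<in> Pbar S" then show "le_bar le (map_option f u) x = le_bar leQ u (map_option g x)"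
      by (elim Pbar_cases) (use A in auto)
  next
    fix x assume "x \<in> Pbar S" then show "map_option f (map_option g x) = x"
      by (elim Pbar_cases) (use A in auto)
  qed
qed

lemma gi_Int:
  assumes "galois_insertion T leT S leS f g"
  shows "galois_insertion (Int_carrier T leT) (Int_le leT) (Int_carrier S leS) (Int_le leS)
     (\<lambda>p. (f (fst p), f (snd p))) (\<lambda>p. (g (fst p), g (snd p)))"
  using assms unfolding galois_insertion_def is_monotone_def Int_carrier_def Int_le_def
  by auto

lemma iso_bar:
  assumes "module_iso S le VA FA VB FB"
  shows "module_iso (Pbar S) (le_bar le) (V_bar VA) (F_bar FA) (V_bar (VB::_ \<Rightarrow> ('k::field) vec set)) (F_bar FB)"
proof -
  obtain \<phi> where phi1: "\<forall>x\<in>S. is_linear_on (VA x) (VB x) (\<phi> x) \<and> bij_betw (\<phi> x) (VA x) (VB x)"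
    and phi2: "\<forall>x\<in>S. \<forall>y\<in>S. le x y \<longrightarrow> (\<forall>v\<in>VA x. \<phi> y (FA x y v) = FB x y (\<phi> x v))"
    using assms unfolding module_iso_def by blast
  define \<psi> where "\<psi> x = (case x of None \<Rightarrow> (\<lambda>v. 0) | Some a \<Rightarrow> \<phi> a)" for x
  have b0: "bij_betw (\<lambda>v. 0) {0::'k vec} {0}" by (auto simp: bij_betw_def)
  have l0: "is_linear_on {0::'k vec} {0} (\<lambda>v. 0)" by (auto simp: is_linear_on_def vscale_def fun_eq_iff)
  have 1: "is_linear_on (V_bar VA x) (V_bar VB x) (\<psi> x) \<and> bij_betw (\<psi> x) (V_bar VA x) (V_bar VB x)"
    if "x \<in> Pbar S" for x
  proof (rule Pbar_cases[OF that])
    assume "x = None" then show ?thesis using b0 l0 by (simp add: \<psi>_def)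
  next
    fix a assume "a \<in> S" "x = Some a" then show ?thesis using phi1 by (simp add: \<psi>_def)
  qed
  have 2: "\<psi> y (F_bar FA x y v) = F_bar FB x y (\<psi> x v)"
    if H: "x \<in> Pbar S" "y \<in> Pbar S" "le_bar le x y" "v \<in> V_bar VA x" for x y v
  proof (cases y)
    case None then show ?thesis by (cases x) (simp_all add: \<psi>_def)
  next
    case (Some b)
    then obtain a where "x = Some a" using H(3) by (cases x) auto
    then show ?thesis using H Some phi2 by (auto simp: \<psi>_def Pbar_def)
  qed
  show ?thesis unfolding module_iso_def using 1 2 by blast
qed

lemma module_pull:
  assumes "is_module Q leQ VG FG" "is_monotone S le Q leQ g"
  shows "is_module S le (\<lambda>x. VG (g x)) (\<lambda>x y. FG (g x) (g y))"
proof -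
  have gm: "\<forall>x\<in>S. g x \<in> Q" "\<forall>x\<in>S. \<forall>y\<in>S. le x y \<longrightarrow> leQ (g x) (g y)"
    using assms(2) unfolding is_monotone_def by blast+
  have sub: "\<forall>x\<in>Q. is_subspace (VG x) \<and> fin_dim (VG x)"
    and lin: "\<forall>x\<in>Q. \<forall>y\<in>Q. leQ x y \<longrightarrow> is_linear_on (VG x) (VG y) (FG x y)"
    and idm: "\<forall>x\<in>Q. \<forall>v\<in>VG x. FG x x v = v"
    and cmp: "\<forall>x\<in>Q. \<forall>y\<in>Q. \<forall>z\<in>Q. leQ x y \<and> leQ y z \<longrightarrow> (\<forall>v\<in>VG x. FG y z (FG x y v) = FG x z v)"
    using assms(1) unfolding is_module_def by blast+
  show ?thesis unfolding is_module_def
  proof (intro conjI)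
    show "\<forall>x\<in>S. is_subspace (VG (g x)) \<and> fin_dim (VG (g x))" using sub gm by simp
    show "\<forall>x\<in>S. \<forall>y\<in>S. le x y \<longrightarrow> is_linear_on (VG (g x)) (VG (g y)) (FG (g x) (g y))" using lin gm by simp
    show "\<forall>x\<in>S. \<forall>v\<in>VG (g x). FG (g x) (g x) v = v" using idm gm by simp
    show "\<forall>x\<in>S. \<forall>y\<in>S. \<forall>z\<in>S. le x y \<and> le y z \<longrightarrow> (\<forall>v\<in>VG (g x). FG (g y) (g z) (FG (g x) (g y) v) = FG (g x) (g z) v)"
      using cmp gm by simp
  qed
qed

lemma module_ker:
  assumes "is_module T leT W G"
  shows "is_module (Int_carrier T leT) (Int_le leT) (\<lambda>p. {v \<in> W (fst p). G (fst p) (snd p) v = 0})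
     (\<lambda>p q. G (fst p) (fst q))"
proof -
  have sub: "\<forall>x\<in>T. is_subspace (W x) \<and> fin_dim (W x)"
    and lin: "\<forall>x\<in>T. \<forall>y\<in>T. leT x y \<longrightarrow> is_linear_on (W x) (W y) (G x y)"
    and idm: "\<forall>x\<in>T. \<forall>v\<in>W x. G x x v = v"
    and cmp: "\<forall>x\<in>T. \<forall>y\<in>T. \<forall>z\<in>T. leT x y \<and> leT y z \<longrightarrow> (\<forall>v\<in>W x. G y z (G x y v) = G x z v)"
    using assms unfolding is_module_def by blast+
  have vs0: "vscale c (0::'b vec) = 0" for c by (simp add: vscale_def fun_eq_iff)
  have 1: "is_subspace {v \<in> W (fst p). G (fst p) (snd p) v = 0} \<and> fin_dim {v \<in> W (fst p). G (fst p) (snd p) v = 0}"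
    if "p \<in> Int_carrier T leT" for p
  proof -
    obtain x y where p: "p = (x, y)" "x \<in> T" "y \<in> T" "leT x y" using \<open>p \<in> Int_carrier T leT\<close> by (auto simp: Int_carrier_def)
    have Wx: "is_subspace (W x)" "fin_dim (W x)" using sub p by auto
    have L: "is_linear_on (W x) (W y) (G x y)" using lin p by auto
    have "is_subspace {v \<in> W x. G x y v = 0}"
      using Wx(1) L lin0[OF L] vs0 unfolding is_subspace_def is_linear_on_def by auto
    moreover have "fin_dim {v \<in> W x. G x y v = 0}"
      using fin_dim_sub[OF calculation _ Wx(2)] by blast
    ultimately show ?thesis using p by simp
  qed
  have 2: "is_linear_on {v \<in> W (fst p). G (fst p) (snd p) v = 0} {v \<in> W (fst q). G (fst q) (snd q) v = 0} (G (fst p) (fst q))"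
    if "p \<in> Int_carrier T leT" "q \<in> Int_carrier T leT" "Int_le leT p q" for p q
  proof -
    obtain x1 y1 where p: "p = (x1, y1)" "x1 \<in> T" "y1 \<in> T" "leT x1 y1" using \<open>p \<in> Int_carrier T leT\<close> by (auto simp: Int_carrier_def)
    obtain x2 y2 where q: "q = (x2, y2)" "x2 \<in> T" "y2 \<in> T" "leT x2 y2" using \<open>q \<in> Int_carrier T leT\<close> by (auto simp: Int_carrier_def)
    have le: "leT x1 x2" "leT y1 y2" using that(3) p q by (auto simp: Int_le_def)
    have L12: "is_linear_on (W x1) (W x2) (G x1 x2)" using lin p q le by auto
    have L11: "is_linear_on (W y1) (W y2) (G y1 y2)" using lin p q le by auto
    have Wy1: "0 \<in> W y1" using sub p unfolding is_subspace_def by auto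
    have "G x2 y2 (G x1 x2 v) = 0" if "v \<in> W x1" "G x1 y1 v = 0" for v
    proof -
      have "G x2 y2 (G x1 x2 v) = G x1 y2 v" using cmp p q le that by blast
      also have "\<dots> = G y1 y2 (G x1 y1 v)" using cmp p q le that by metis
      also have "\<dots> = 0" using that lin0[OF L11 Wy1] by simp
      finally show ?thesis .
    qed
    then show ?thesis using L12 p q unfolding is_linear_on_def by auto
  qed
  have 3: "G (fst p) (fst p) v = v" if "p \<in> Int_carrier T leT" "v \<in> {v \<in> W (fst p). G (fst p) (snd p) v = 0}" for p v
    using that idm by (auto simp: Int_carrier_def)
  have 4: "G (fst q) (fst r) (G (fst p) (fst q) v) = G (fst p) (fst r) v"
    if "p \<in> Int_carrier T leT" "q \<in> Int_carrier T leT" "r \<in> Int_carrier T leT" "Int_le leT p q \<and> Int_le leT q r"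
       "v \<in> {v \<in> W (fst p). G (fst p) (snd p) v = 0}" for p q r v
  proof -
    have "fst p \<in> T" "fst q \<in> T" "fst r \<in> T" using that by (auto simp: Int_carrier_def)
    moreover have "leT (fst p) (fst q)" "leT (fst q) (fst r)" using that(4) by (auto simp: Int_le_def)
    ultimately show ?thesis using cmp that(5) by blast
  qed
  show ?thesis unfolding is_module_def using 1 2 3 4 by blast
qed

lemma iso_ker:
  assumes "is_module T leT W1 G1" "is_module T leT W2 G2" "module_iso T leT W1 G1 W2 G2"
  shows "module_iso (Int_carrier T leT) (Int_le leT) (\<lambda>p. {v \<in> W1 (fst p). G1 (fst p) (snd p) v = 0})
     (\<lambda>p q. G1 (fst p) (fst q)) (\<lambda>p. {v \<in> W2 (fst p). G2 (fst p) (snd p) v = 0}) (\<lambda>p q. G2 (fst p) (fst q))"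
proof -
  obtain \<phi> where phi1: "\<forall>x\<in>T. is_linear_on (W1 x) (W2 x) (\<phi> x) \<and> bij_betw (\<phi> x) (W1 x) (W2 x)"
    and phi2: "\<forall>x\<in>T. \<forall>y\<in>T. leT x y \<longrightarrow> (\<forall>v\<in>W1 x. \<phi> y (G1 x y v) = G2 x y (\<phi> x v))"
    using assms(3) unfolding module_iso_def by blast
  have sub1: "\<forall>x\<in>T. is_subspace (W1 x)"
    and lin1: "\<forall>x\<in>T. \<forall>y\<in>T. leT x y \<longrightarrow> is_linear_on (W1 x) (W1 y) (G1 x y)"
    using assms(1) unfolding is_module_def by blast+
  have 1: "is_linear_on {v \<in> W1 (fst p). G1 (fst p) (snd p) v = 0} {v \<in> W2 (fst p). G2 (fst p) (snd p) v = 0} (\<phi> (fst p))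
     \<and> bij_betw (\<phi> (fst p)) {v \<in> W1 (fst p). G1 (fst p) (snd p) v = 0} {v \<in> W2 (fst p). G2 (fst p) (snd p) v = 0}"
    if "p \<in> Int_carrier T leT" for p
  proof -
    obtain x y where p: "p = (x, y)" "x \<in> T" "y \<in> T" "leT x y" using \<open>p \<in> Int_carrier T leT\<close> by (auto simp: Int_carrier_def)
    have Lx: "is_linear_on (W1 x) (W2 x) (\<phi> x)" and Bx: "bij_betw (\<phi> x) (W1 x) (W2 x)" using phi1 p by auto
    have Ly: "is_linear_on (W1 y) (W2 y) (\<phi> y)" and By: "bij_betw (\<phi> y) (W1 y) (W2 y)" using phi1 p by auto
    have LG: "is_linear_on (W1 x) (W1 y) (G1 x y)" using lin1 p by auto
    have z: "0 \<in> W1 y" using sub1 p unfolding is_subspace_def by auto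
    have py0: "\<phi> y 0 = 0" using lin0[OF Ly z] .
    have com: "\<phi> y (G1 x y v) = G2 x y (\<phi> x v)" if "v \<in> W1 x" for v using phi2 p that by blast
    have A: "\<phi> x v \<in> {w \<in> W2 x. G2 x y w = 0}" if "v \<in> W1 x" "G1 x y v = 0" for v
      using that com[of v] py0 Lx unfolding is_linear_on_def by auto
    have B: "w \<in> \<phi> x ` {v \<in> W1 x. G1 x y v = 0}" if "w \<in> W2 x" "G2 x y w = 0" for w
    proof -
      obtain v where v: "v \<in> W1 x" "w = \<phi> x v" using Bx \<open>w \<in> W2 x\<close> unfolding bij_betw_def by auto
      have "\<phi> y (G1 x y v) = \<phi> y 0" using com[OF v(1)] v(2) that(2) py0 by simp
      moreover have "G1 x y v \<in> W1 y" using LG v(1) unfolding is_linear_on_def by auto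
      ultimately have "G1 x y v = 0" using By z unfolding bij_betw_def inj_on_def by blast
      then show ?thesis using v by blast
    qed
    have "bij_betw (\<phi> x) {v \<in> W1 x. G1 x y v = 0} {w \<in> W2 x. G2 x y w = 0}"
      unfolding bij_betw_def
    proof
      show "inj_on (\<phi> x) {v \<in> W1 x. G1 x y v = 0}" using Bx unfolding bij_betw_def inj_on_def by blast
      show "\<phi> x ` {v \<in> W1 x. G1 x y v = 0} = {w \<in> W2 x. G2 x y w = 0}" using A B by blast
    qed
    moreover have "is_linear_on {v \<in> W1 x. G1 x y v = 0} {w \<in> W2 x. G2 x y w = 0} (\<phi> x)"
      using A Lx unfolding is_linear_on_def by auto
    ultimately show ?thesis using p by simp
  qed
  have 2: "\<phi> (fst q) (G1 (fst p) (fst q) v) = G2 (fst p) (fst q) (\<phi> (fst p) v)"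
    if "p \<in> Int_carrier T leT" "q \<in> Int_carrier T leT" "Int_le leT p q" "v \<in> {v \<in> W1 (fst p). G1 (fst p) (snd p) v = 0}" for p q v
  proof -
    have "fst p \<in> T" "fst q \<in> T" "leT (fst p) (fst q)" using that by (auto simp: Int_carrier_def Int_le_def)
    then show ?thesis using phi2 that(4) by blast
  qed
  show ?thesis unfolding module_iso_def
    by (rule exI[of _ "\<lambda>p. \<phi> (fst p)"]) (use 1 2 in blast)
qed

lemma K_V_eq: "K_V V F = (\<lambda>p. {v \<in> V_bar V (fst p). F_bar F (fst p) (snd p) v = 0})"
  by (simp add: fun_eq_iff K_V_def)
lemma K_F_eq: "K_F F = (\<lambda>p q. F_bar F (fst p) (fst q))"
  by (simp add: fun_eq_iff K_F_def)

lemma K_module: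
  assumes "is_module S le V F"
  shows "is_module (Int_carrier (Pbar S) (le_bar le)) (Int_le (le_bar le)) (K_V V F) (K_F F)"
  unfolding K_V_eq K_F_eq by (rule module_ker[OF module_bar[OF assms]])

lemma K_iso:
  assumes "is_module S le VA FA" "is_module S le VB FB" "module_iso S le VA FA VB FB"
  shows "module_iso (Int_carrier (Pbar S) (le_bar le)) (Int_le (le_bar le)) (K_V VA FA) (K_F FA) (K_V VB FB) (K_F FB)"
  unfolding K_V_eq K_F_eq by (rule iso_ker[OF module_bar[OF assms(1)] module_bar[OF assms(2)] iso_bar[OF assms(3)]])

lemma K_V_pull: "K_V VG FG (map_option g (fst p), map_option g (snd p)) = K_V (\<lambda>a. VG (g a)) (\<lambda>a b. FG (g a) (g b)) p"
  by (cases p; rename_tac x y; case_tac x; case_tac y) (auto simp: K_V_def)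

lemma K_F_pull: "K_F FG (map_option g (fst p), map_option g (snd p)) (map_option g (fst q), map_option g (snd q))
   = K_F (\<lambda>a b. FG (g a) (g b)) p q"
  by (cases p; cases q; rename_tac x y x' y'; case_tac x; case_tac x') (auto simp: K_F_def)

definition coupling_gen :: "'b set \<Rightarrow> ('b \<Rightarrow> 'b \<Rightarrow> bool)
    \<Rightarrow> ('b \<Rightarrow> ('k::field) vec set) \<Rightarrow> ('b \<Rightarrow> 'b \<Rightarrow> 'k vec \<Rightarrow> 'k vec)
    \<Rightarrow> ('b \<Rightarrow> 'k vec set) \<Rightarrow> ('b \<Rightarrow> 'b \<Rightarrow> 'k vec \<Rightarrow> 'k vec)
    \<Rightarrow> 'c set \<Rightarrow> ('c \<Rightarrow> 'c \<Rightarrow> bool) \<Rightarrow> ('c \<Rightarrow> 'b) \<Rightarrow> ('b \<Rightarrow> 'c) \<Rightarrow> ('c \<Rightarrow> 'b) \<Rightarrow> ('b \<Rightarrow> 'c)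
    \<Rightarrow> ('c \<Rightarrow> 'k vec set) \<Rightarrow> ('c \<Rightarrow> 'c \<Rightarrow> 'k vec \<Rightarrow> 'k vec) \<Rightarrow> bool" where
  "coupling_gen S le VA FA VB FB Q leQ f g h i VG FG \<longleftrightarrow>
     finite Q \<and> is_poset Q leQ
     \<and> galois_insertion Q leQ S le f g \<and> galois_insertion Q leQ S le h i
     \<and> is_module Q leQ VG FG
     \<and> module_iso S le (\<lambda>x. VG (g x)) (\<lambda>x y. FG (g x) (g y)) VA FA
     \<and> module_iso S le (\<lambda>x. VG (i x)) (\<lambda>x y. FG (i x) (i y)) VB FB"

lemma tr_poset: "is_poset (to_nat ` Q) (\<lambda>a b. leQ (from_nat a) (from_nat b)) = is_poset (Q::'c::countable set) leQ"
  by (simp add: is_poset_def)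

lemma tr_gi: "galois_insertion (to_nat ` Q) (\<lambda>a b. leQ (from_nat a) (from_nat b)) S le (\<lambda>a. f (from_nat a)) (\<lambda>x. to_nat (g x))
   = galois_insertion (Q::'c::countable set) leQ S le f g"
  by (simp add: galois_insertion_def is_monotone_def inj_image_mem_iff)

lemma tr_module: "is_module (to_nat ` Q) (\<lambda>a b. leQ (from_nat a) (from_nat b)) (\<lambda>a. VG (from_nat a)) (\<lambda>a b. FG (from_nat a) (from_nat b))
   = is_module (Q::'c::countable set) leQ VG FG"
  by (simp add: is_module_def)

lemma transport:
  fixes Q :: "'c::countable set"
  assumes "coupling_gen S le VA FA VB FB Q leQ f g h i VG FG"
  shows "\<exists>Q' leQ' f' g' h' i' VG' FG'. is_coupling S le VA FA VB FB Q' leQ' f' g' h' i' VG' FG'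
     \<and> (SUP q\<in>Q'. dd (f' q) (h' q)) = (SUP q\<in>Q. dd (f q) (h q))"
proof (intro exI conjI)
  show "is_coupling S le VA FA VB FB (to_nat ` Q) (\<lambda>a b. leQ (from_nat a) (from_nat b))
     (\<lambda>a. f (from_nat a)) (\<lambda>x. to_nat (g x)) (\<lambda>a. h (from_nat a)) (\<lambda>x. to_nat (i x))
     (\<lambda>a. VG (from_nat a)) (\<lambda>a b. FG (from_nat a) (from_nat b))"
    using assms unfolding is_coupling_def coupling_gen_def tr_poset tr_gi tr_module by simp
  show "(SUP q\<in>to_nat ` Q. dd (f (from_nat q)) (h (from_nat q))) = (SUP q\<in>Q. dd (f q) (h q))"
    by (simp add: image_image)
qed

lemma finite_IntPbar: "finite Q \<Longrightarrow> finite (Int_carrier (Pbar Q) leQ)"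
  by (rule finite_subset[of _ "Pbar Q \<times> Pbar Q"]) (auto simp: Int_carrier_def Pbar_def)

lemma cost_le:
  fixes d :: "'a \<Rightarrow> 'a \<Rightarrow> real"
  shows "(SUP p\<in>Int_carrier (Pbar Q) leQ. Int_dist (d_bar d) (map_option f (fst p), map_option f (snd p))
        (map_option h (fst p), map_option h (snd p))) \<le> (SUP q\<in>Q. ennreal (d (f q) (h q)))"
proof (rule SUP_least)
  have key: "d_bar d (map_option f x) (map_option h x) \<le> (SUP q\<in>Q. ennreal (d (f q) (h q)))" if "x \<in> Pbar Q" for x
  proof (rule Pbar_cases[OF that])
    assume "x = None" then show ?thesis by simp
  next
    fix a assume "a \<in> Q" "x = Some a" then show ?thesis by (auto intro!: SUP_upper)
  qed
  fix p assume "p \<in> Int_carrier (Pbar Q) leQ"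
  then have "fst p \<in> Pbar Q" "snd p \<in> Pbar Q" by (auto simp: Int_carrier_def)
  then show "Int_dist (d_bar d) (map_option f (fst p), map_option f (snd p))
        (map_option h (fst p), map_option h (snd p)) \<le> (SUP q\<in>Q. ennreal (d (f q) (h q)))"
    unfolding Int_dist_def using key by simp
qed

lemma K_coupling:
  fixes Q :: "nat set"
  assumes "is_coupling P le VM FM VN FN Q leQ f g h i VG FG"
    and "is_module P le VM FM" "is_module P le VN FN"
  shows "coupling_gen (Int_carrier (Pbar P) (le_bar le)) (Int_le (le_bar le))
     (K_V VM FM) (K_F FM) (K_V VN FN) (K_F FN)
     (Int_carrier (Pbar Q) (le_bar leQ)) (Int_le (le_bar leQ))
     (\<lambda>p. (map_option f (fst p), map_option f (snd p))) (\<lambda>p. (map_option g (fst p), map_option g (snd p)))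
     (\<lambda>p. (map_option h (fst p), map_option h (snd p))) (\<lambda>p. (map_option i (fst p), map_option i (snd p)))
     (K_V VG FG) (K_F FG)"
proof -
  have fQ: "finite Q" and pQ: "is_poset Q leQ" and gi1: "galois_insertion Q leQ P le f g"
    and gi2: "galois_insertion Q leQ P le h i" and mG: "is_module Q leQ VG FG"
    and iso1: "module_iso P le (\<lambda>x. VG (g x)) (\<lambda>x y. FG (g x) (g y)) VM FM"
    and iso2: "module_iso P le (\<lambda>x. VG (i x)) (\<lambda>x y. FG (i x) (i y)) VN FN"
    using assms(1) unfolding is_coupling_def by blast+
  have mg: "is_monotone P le Q leQ g" using gi1 unfolding galois_insertion_def by blast
  have mi: "is_monotone P le Q leQ i" using gi2 unfolding galois_insertion_def by blast
  have I1: "module_iso (Int_carrier (Pbar P) (le_bar le)) (Int_le (le_bar le))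
     (\<lambda>x. K_V VG FG (map_option g (fst x), map_option g (snd x)))
     (\<lambda>x y. K_F FG (map_option g (fst x), map_option g (snd x)) (map_option g (fst y), map_option g (snd y)))
     (K_V VM FM) (K_F FM)"
    unfolding K_V_pull K_F_pull
    by (rule K_iso[OF module_pull[OF mG mg] assms(2) iso1])
  have I2: "module_iso (Int_carrier (Pbar P) (le_bar le)) (Int_le (le_bar le))
     (\<lambda>x. K_V VG FG (map_option i (fst x), map_option i (snd x)))
     (\<lambda>x y. K_F FG (map_option i (fst x), map_option i (snd x)) (map_option i (fst y), map_option i (snd y)))
     (K_V VN FN) (K_F FN)"
    unfolding K_V_pull K_F_pull
    by (rule K_iso[OF module_pull[OF mG mi] assms(3) iso2])
  show ?thesis unfolding coupling_gen_def
    using finite_IntPbar[OF fQ] poset_Int[OF poset_bar[OF pQ]] gi_Int[OF gi_bar[OF gi1]] gi_Int[OF gi_bar[OF gi2]]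
      K_module[OF mG] I1 I2 by blast
qed

theorem proposition6p12:
  fixes P :: "'a set" and le :: "'a \<Rightarrow> 'a \<Rightarrow> bool" and d :: "'a \<Rightarrow> 'a \<Rightarrow> real"
    and VM VN :: "'a \<Rightarrow> ('k::field) vec set"
    and FM FN :: "'a \<Rightarrow> 'a \<Rightarrow> 'k vec \<Rightarrow> 'k vec"
  assumes "finite P" and "is_poset P le" and "is_metric P d"
    and "is_module P le VM FM" and "is_module P le VN FN"
  shows "d_GT (Int_carrier (Pbar P) (le_bar le)) (Int_le (le_bar le)) (Int_dist (d_bar d))
            (K_V VM FM) (K_F FM) (K_V VN FN) (K_F FN)
         \<le> d_GT P le (\<lambda>x y. ennreal (d x y)) VM FM VN FN"
  unfolding d_GT_def
proof (rule Inf_mono)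
  fix b assume "b \<in> {(SUP q\<in>Q. ennreal (d (f q) (h q))) | Q leQ f g h i VG FG.
            is_coupling P le VM FM VN FN Q leQ f g h i VG FG}"
  then obtain Q leQ f g h i VG FG where b: "b = (SUP q\<in>Q. ennreal (d (f q) (h q)))"
    and C: "is_coupling P le VM FM VN FN Q leQ f g h i VG FG" by blast
  obtain Q' leQ' f' g' h' i' VG' FG' where C': "is_coupling (Int_carrier (Pbar P) (le_bar le)) (Int_le (le_bar le))
     (K_V VM FM) (K_F FM) (K_V VN FN) (K_F FN) Q' leQ' f' g' h' i' VG' FG'"
    and eq: "(SUP q\<in>Q'. Int_dist (d_bar d) (f' q) (h' q)) =
      (SUP p\<in>Int_carrier (Pbar Q) (le_bar leQ). Int_dist (d_bar d) (map_option f (fst p), map_option f (snd p))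
        (map_option h (fst p), map_option h (snd p)))"
    using transport[OF K_coupling[OF C assms(4,5)], of "Int_dist (d_bar d)"] by blast
  show "\<exists>a\<in>{(SUP q\<in>Q. Int_dist (d_bar d) (f q) (h q)) | Q leQ f g h i VG FG.
            is_coupling (Int_carrier (Pbar P) (le_bar le)) (Int_le (le_bar le))
     (K_V VM FM) (K_F FM) (K_V VN FN) (K_F FN) Q leQ f g h i VG FG}. a \<le> b"
    using C' eq cost_le[of d f h Q "le_bar leQ"] b by fastforce
qed

end
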